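(* Let $n\ge 1$ and let $P_n$ be the path on the $n$ vertices $v_1v_2\cdots v_n$. Let $D$ be any dominating set of $P_n$ of minimum cardinality $\gamma(P_n)$, and let $\mathcal{C}_D(P_n)=\sum_{u\in D}\deg_{P_n}(u)$. Then: (i) if $n=3k$ for a positive integer $k$, then $\mathcal{C}_D(P_n)=2k$; (ii) if $n=3k+1$ for an integer $k\ge 0$, then $2k\le \mathcal{C}_D(P_n)\le 2k+2$; (iii) if $n=3k+2$ for an integer $k\ge 0$, then $2k+1\le \mathcal{C}_D(P_n)\le 2k+2$.
   Context: All graphs are finite and simple. A set $D\subseteq V(G)$ is a dominating set of $G$ if every vertex of $V(G)\setminus D$ has a neighbor in $D$. The domination number $\gamma(G)$ is the minimum cardinality of a dominating set, and a dominating set of cardinality $\gamma(G)$ is called a $\gamma$-set. For $D\subseteq V(G)$, the domination cover number (covering number) of $D$ is $\mathcal{C}_D(G)=\sum_{u\in D}\deg_G(u)$. *)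

theory Defs
  imports Main
begin

text \<open>A finite simple graph is given by a finite vertex set V and a symmetric
irreflexive adjacency relation E (only its restriction to V matters).\<close>

definition neighbors :: "'a set \<Rightarrow> ('a \<Rightarrow> 'a \<Rightarrow> bool) \<Rightarrow> 'a \<Rightarrow> 'a set" where
  "neighbors V E u = {w \<in> V. E u w}"

definition degree :: "'a set \<Rightarrow> ('a \<Rightarrow> 'a \<Rightarrow> bool) \<Rightarrow> 'a \<Rightarrow> nat" where
  "degree V E u = card (neighbors V E u)"

definition dominating_set :: "'a set \<Rightarrow> ('a \<Rightarrow> 'a \<Rightarrow> bool) \<Rightarrow> 'a set \<Rightarrow> bool" where
  "dominating_set V E D \<longleftrightarrow> D \<subseteq> V \<and> (\<forall>v \<in> V - D. \<exists>u \<in> D. E v u)"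

definition domination_number :: "'a set \<Rightarrow> ('a \<Rightarrow> 'a \<Rightarrow> bool) \<Rightarrow> nat" where
  "domination_number V E = Min (card ` {D. dominating_set V E D})"

definition gamma_set :: "'a set \<Rightarrow> ('a \<Rightarrow> 'a \<Rightarrow> bool) \<Rightarrow> 'a set \<Rightarrow> bool" where
  "gamma_set V E D \<longleftrightarrow> dominating_set V E D \<and> card D = domination_number V E"

definition cover_number :: "'a set \<Rightarrow> ('a \<Rightarrow> 'a \<Rightarrow> bool) \<Rightarrow> 'a set \<Rightarrow> nat" where
  "cover_number V E D = (\<Sum>u\<in>D. degree V E u)"

definition path_vertices :: "nat \<Rightarrow> nat set" where
  "path_vertices n = {1..n}"

definition path_adj :: "nat \<Rightarrow> nat \<Rightarrow> bool" where
  "path_adj i j \<longleftrightarrow> j = i + 1 \<or> i = j + 1"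

end

theory Submission
  imports Defs
begin

lemma deg_le2: "degree (path_vertices n) path_adj u \<le> 2"
proof -
  have "neighbors (path_vertices n) path_adj u \<subseteq> {u+1, u-1}"
    unfolding neighbors_def path_adj_def by auto
  hence "degree (path_vertices n) path_adj u \<le> card {u+1, u-1}"
    unfolding degree_def by (intro card_mono) auto
  also have "\<dots> \<le> 2" by (simp add: card_insert_le_m1)
  finally show ?thesis .
qed

lemma cover_le: "finite D \<Longrightarrow> cover_number (path_vertices n) path_adj D \<le> 2 * card D"
  unfolding cover_number_def
  using sum_mono[of D "\<lambda>u. degree (path_vertices n) path_adj u" "\<lambda>_. 2"] deg_le2
  by simp

lemma cover_ge:
  assumes "dominating_set (path_vertices n) path_adj D"
  shows "n \<le> cover_number (path_vertices n) path_adj D + card D"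
proof -
  let ?V = "path_vertices n"
  let ?N = "\<lambda>u. insert u (neighbors ?V path_adj u)"
  have DV: "D \<subseteq> ?V" using assms unfolding dominating_set_def by auto
  have fin: "finite D" using DV finite_subset unfolding path_vertices_def by blast
  have "?V \<subseteq> (\<Union>u\<in>D. ?N u)"
  proof
    fix v assume v: "v \<in> ?V"
    show "v \<in> (\<Union>u\<in>D. ?N u)"
    proof (cases "v \<in> D")
      case True then show ?thesis by auto
    next
      case False
      then obtain u where "u \<in> D" "path_adj v u" using assms v unfolding dominating_set_def by auto
      then show ?thesis using v unfolding neighbors_def path_adj_def by auto
    qed
  qed
  moreover have "finite (\<Union>u\<in>D. ?N u)"
  proof -
    have "(\<Union>u\<in>D. ?N u) \<subseteq> ?V" using DV unfolding neighbors_def by auto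
    moreover have "finite ?V" by (simp add: path_vertices_def)
    ultimately show ?thesis by (rule finite_subset)
  qed
  ultimately have "card ?V \<le> card (\<Union>u\<in>D. ?N u)" using card_mono by blast
  also have "\<dots> \<le> (\<Sum>u\<in>D. card (?N u))" by (rule card_UN_le[OF fin])
  also have "\<dots> = (\<Sum>u\<in>D. degree ?V path_adj u + 1)"
  proof (rule sum.cong)
    fix u assume "u \<in> D"
    have "u \<notin> neighbors ?V path_adj u" unfolding neighbors_def path_adj_def by auto
    moreover have "finite (neighbors ?V path_adj u)" unfolding neighbors_def path_vertices_def by auto
    ultimately show "card (?N u) = degree ?V path_adj u + 1" unfolding degree_def by simp
  qed simp
  also have "\<dots> = cover_number ?V path_adj D + card D"
    unfolding cover_number_def by (simp add: sum_Suc)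
  finally show ?thesis unfolding path_vertices_def by simp
qed

lemma gamma_le:
  assumes "n \<ge> 1" "gamma_set (path_vertices n) path_adj D"
  shows "card D \<le> (n+2) div 3"
proof -
  let ?V = "path_vertices n"
  define D0 where "D0 = (\<lambda>i. min (3*i+2) n) ` {..<(n+2) div 3}"
  have c0: "card D0 \<le> (n+2) div 3" unfolding D0_def using card_image_le[of "{..<(n+2) div 3}" "\<lambda>i. min (3*i+2) n"] by simp
  have "dominating_set ?V path_adj D0"
    unfolding dominating_set_def
  proof (intro conjI ballI)
    show "D0 \<subseteq> ?V" using assms(1) unfolding D0_def path_vertices_def by auto
  next
    fix v assume v: "v \<in> ?V - D0"
    hence v1: "1 \<le> v" "v \<le> n" "v \<notin> D0" unfolding path_vertices_def by auto
    define q where "q = v div 3"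
    have vq: "v = 3*q + v mod 3" unfolding q_def by simp
    have "v mod 3 < 3" by simp
    hence "v mod 3 = 0 \<or> v mod 3 = 1 \<or> v mod 3 = 2" by arith
    then show "\<exists>u\<in>D0. path_adj v u"
    proof (elim disjE)
      assume r0: "v mod 3 = 0"
      have r: "v = 3*q" using vq r0 by linarith
      hence q1: "q \<ge> 1" using v1 by auto
      have i1: "q - 1 \<in> {..<(n+2) div 3}" using v1(1,2) r by simp
      have i2: "v - 1 = min (3*(q-1)+2) n" using v1 r q1 by (simp add: min_def, linarith)
      have "v - 1 \<in> D0" unfolding D0_def by (rule image_eqI[where f="\<lambda>i. min (3*i+2) n", OF i2 i1])
      then show ?thesis using q1 r unfolding path_adj_def by (intro bexI[of _ "v-1"]) auto
    next
      assume r0: "v mod 3 = 1"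
      have r: "v = 3*q+1" using vq r0 by linarith
      have "q < (n+2) div 3" using v1(1,2) r by presburger
      hence m: "min (3*q+2) n \<in> D0" unfolding D0_def by auto
      show ?thesis
      proof (cases "3*q+2 \<le> n")
        case True
        then show ?thesis using m r unfolding path_adj_def by (intro bexI[of _ "v+1"]) auto
      next
        case False
        hence "min (3*q+2) n = v" using v1 r by (simp add: min_def)
        then show ?thesis using m v1 by auto
      qed
    next
      assume r0: "v mod 3 = 2"
      have r: "v = 3*q+2" using vq r0 by linarith
      have "q < (n+2) div 3" using v1(1,2) r by presburger
      hence "min (3*q+2) n \<in> D0" unfolding D0_def by auto
      moreover have "min (3*q+2) n = v" using v1 r by (simp add: min_def)
      ultimately show ?thesis using v1 by auto
    qed
  qed
  moreover have "finite (card ` {D. dominating_set ?V path_adj D})"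
  proof -
    have "{D. dominating_set ?V path_adj D} \<subseteq> Pow ?V" unfolding dominating_set_def by auto
    moreover have "finite (Pow ?V)" unfolding path_vertices_def by simp
    ultimately show ?thesis using finite_subset by blast
  qed
  ultimately have "domination_number ?V path_adj \<le> card D0"
    unfolding domination_number_def by (intro Min_le) auto
  then show ?thesis using assms(2) c0 unfolding gamma_set_def by simp
qed

theorem mainTheorem1:
  fixes n :: nat and D :: "nat set"
  assumes "n \<ge> 1"
    and "gamma_set (path_vertices n) path_adj D"
  shows "(\<forall>k::nat. k \<ge> 1 \<and> n = 3 * k \<longrightarrow>
            cover_number (path_vertices n) path_adj D = 2 * k)
       \<and> (\<forall>k::nat. n = 3 * k + 1 \<longrightarrow>
            2 * k \<le> cover_number (path_vertices n) path_adj D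
            \<and> cover_number (path_vertices n) path_adj D \<le> 2 * k + 2)
       \<and> (\<forall>k::nat. n = 3 * k + 2 \<longrightarrow>
            2 * k + 1 \<le> cover_number (path_vertices n) path_adj D
            \<and> cover_number (path_vertices n) path_adj D \<le> 2 * k + 2)"
proof -
  have ds: "dominating_set (path_vertices n) path_adj D" using assms(2) unfolding gamma_set_def by simp
  have fin: "finite D" using ds finite_subset unfolding dominating_set_def path_vertices_def by blast
  have a: "card D \<le> (n+2) div 3" by (rule gamma_le[OF assms])
  have b: "cover_number (path_vertices n) path_adj D \<le> 2 * card D" by (rule cover_le[OF fin])
  have c: "n \<le> cover_number (path_vertices n) path_adj D + card D" by (rule cover_ge[OF ds])
  show ?thesis
  proof (intro conjI allI impI)
    fix k assume h: "k \<ge> 1 \<and> n = 3 * k"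
    hence "(n+2) div 3 = k" by simp
    thus "cover_number (path_vertices n) path_adj D = 2 * k" using a b c h by linarith
  next
    fix k assume h: "n = 3 * k + 1"
    hence "(n+2) div 3 = k + 1" by simp
    thus "2 * k \<le> cover_number (path_vertices n) path_adj D" using a b c h by linarith
    show "cover_number (path_vertices n) path_adj D \<le> 2 * k + 2" using a b c h \<open>(n+2) div 3 = k + 1\<close> by linarith
  next
    fix k assume h: "n = 3 * k + 2"
    hence "(n+2) div 3 = k + 1" by simp
    thus "2 * k + 1 \<le> cover_number (path_vertices n) path_adj D" using a b c h by linarith
    show "cover_number (path_vertices n) path_adj D \<le> 2 * k + 2" using a b c h \<open>(n+2) div 3 = k + 1\<close> by linarith
  qed
qed

end
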